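(* Let $\mathbf{Sym}$ be the free associative (noncommutative) algebra over $\mathbb{C}$ generated by $S_1,S_2,\dots$, graded by $\deg S_n=n$, let $\widehat{\mathbf{Sym}}$ be its completion (formal sums $\sum_{n\ge 0}f_n$ with $f_n$ homogeneous of degree $n$), and put $S_0=1$ and $\sigma_1=\sum_{n\ge 0}S_n$. Let $K_n\in\mathbf{Sym}$ ($n\ge 0$) be the unique homogeneous elements of degree $n$ with $K_0=1$ such that $$\sigma_1=\sum_{n\ge 0}K_n\,\sigma_1^{\,n},$$ and let $g=\sum_{n\ge0}g_n$ ($g_n$ homogeneous of degree $n$, $g_0=1$) be the unique element of $\widehat{\mathbf{Sym}}$ such that $g=\sum_{n\ge 0}S_n\,g^{\,n}$. Then $$1+\sum_{n\ge 1}K_n \;=\; \big(g^{-1}\big)(-A),$$ where $g^{-1}$ is the multiplicative inverse of $g$ in $\widehat{\mathbf{Sym}}$ and $f\mapsto f(-A)$ is the map defined in the context.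
   Context: The noncommutative elementary functions $\Lambda_n$ are defined by $\Lambda_0=1$ and $\big(\sum_{n\ge0}S_nt^n\big)\big(\sum_{n\ge0}(-1)^n\Lambda_nt^n\big)=1$. For $f\in\widehat{\mathbf{Sym}}$, $f(-A)$ denotes the image of $f$ under the (continuous) algebra automorphism of $\widehat{\mathbf{Sym}}$ sending $S_n\mapsto(-1)^n\Lambda_n$ for all $n\ge1$. *)

theory Defs
  imports Complex_Main
begin

text \<open>A word
  [a1,...,ak] of naturals encodes the monomial S_(a1+1) ... S_(ak+1);
  an element of the completion of Sym is an arbitrary coefficient function
  on words.\<close>

type_synonym ncsym = "nat list \<Rightarrow> complex"

definition wdeg :: "nat list \<Rightarrow> nat" where
  "wdeg w = sum_list (map Suc w)"

definition nc_one :: ncsym where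
  "nc_one = (\<lambda>w. if w = [] then 1 else 0)"

definition nc_zero :: ncsym where
  "nc_zero = (\<lambda>w. 0)"

definition nc_add :: "ncsym \<Rightarrow> ncsym \<Rightarrow> ncsym" where
  "nc_add f g = (\<lambda>w. f w + g w)"

definition nc_smult :: "complex \<Rightarrow> ncsym \<Rightarrow> ncsym" where
  "nc_smult c f = (\<lambda>w. c * f w)"

definition nc_mult :: "ncsym \<Rightarrow> ncsym \<Rightarrow> ncsym" where
  "nc_mult f g = (\<lambda>w. \<Sum>k\<le>length w. f (take k w) * g (drop k w))"

primrec nc_pow :: "ncsym \<Rightarrow> nat \<Rightarrow> ncsym" where
  "nc_pow f 0 = nc_one"
| "nc_pow f (Suc n) = nc_mult f (nc_pow f n)"

definition S :: "nat \<Rightarrow> ncsym" where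
  "S n = (if n = 0 then nc_one else (\<lambda>w. if w = [n - 1] then 1 else 0))"

definition homogeneous :: "nat \<Rightarrow> ncsym \<Rightarrow> bool" where
  "homogeneous d f \<longleftrightarrow> (\<forall>w. f w \<noteq> 0 \<longrightarrow> wdeg w = d)"

text \<open>Formal (coefficientwise) sum of a family; it is the correct formal sum
  whenever each coefficient is nonzero for only finitely many members,
  which holds for every family used below (member n has order \<ge> n).\<close>
definition fsum :: "(nat \<Rightarrow> ncsym) \<Rightarrow> ncsym" where
  "fsum F = (\<lambda>w. \<Sum>n\<in>{n. F n w \<noteq> 0}. F n w)"

definition sigma1 :: ncsym where
  "sigma1 = fsum S"

text \<open>Image of the monomial of word w under the algebra morphism
  S_n \<mapsto> (-1)^n Lam_n.\<close>
definition negA_word :: "(nat \<Rightarrow> ncsym) \<Rightarrow> nat list \<Rightarrow> ncsym" where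
  "negA_word Lam w = foldr (\<lambda>a acc. nc_mult (nc_smult ((-1) ^ Suc a) (Lam (Suc a))) acc) w nc_one"

text \<open>f(-A): continuous extension; since Lam_n is homogeneous of degree n,
  the image of word w is homogeneous of degree wdeg w, so the coefficient at v
  only receives contributions from words w of the same degree as v.\<close>
definition negA :: "(nat \<Rightarrow> ncsym) \<Rightarrow> ncsym \<Rightarrow> ncsym" where
  "negA Lam f = (\<lambda>v. \<Sum>w\<in>{w. wdeg w = wdeg v}. f w * negA_word Lam w v)"

end

theory Submission
  imports Defs
begin

lemma wdeg_Nil[simp]: "wdeg [] = 0" and wdeg_Cons[simp]: "wdeg (a#w) = Suc a + wdeg w"
  and wdeg_append[simp]: "wdeg (u @ v) = wdeg u + wdeg v"
  by (simp_all add: wdeg_def)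

lemma wdeg_take_drop: "wdeg (take k w) + wdeg (drop k w) = wdeg w"
  by (metis append_take_drop_id wdeg_append)

lemma wdeg_eq0[simp]: "wdeg w = 0 \<longleftrightarrow> w = []"
  by (cases w) auto

lemma length_le_wdeg: "length w \<le> wdeg w"
  by (induction w) auto

lemma nc_mult_Nil: "nc_mult f g [] = f [] * g []"
  by (simp add: nc_mult_def)

lemma nc_mult_Cons: "nc_mult f g (a#w) = f [] * g (a#w) + nc_mult (\<lambda>u. f (a#u)) g w"
  unfolding nc_mult_def
  by (simp add: sum.atMost_Suc_shift del: sum.atMost_Suc)

lemma nc_mult_add_left: "nc_mult (\<lambda>w. f w + g w) h = (\<lambda>w. nc_mult f h w + nc_mult g h w)"
  by (rule ext) (simp add: nc_mult_def distrib_right sum.distrib)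

lemma nc_mult_smult_left: "nc_mult (\<lambda>w. c * f w) h = (\<lambda>w. c * nc_mult f h w)"
  by (rule ext) (simp add: nc_mult_def sum_distrib_left mult.assoc)

lemma nc_mult_assoc: "nc_mult (nc_mult f g) h = nc_mult f (nc_mult g h)"
proof
  fix w show "nc_mult (nc_mult f g) h w = nc_mult f (nc_mult g h) w"
  proof (induction w arbitrary: f g h)
    case Nil thus ?case by (simp add: nc_mult_Nil)
  next
    case (Cons a w)
    have D: "(\<lambda>u. nc_mult f g (a#u)) = (\<lambda>u. nc_mult (\<lambda>u. f (a#u)) g u + f [] * g (a#u))"
      by (rule ext) (simp add: nc_mult_Cons add.commute)
    have "nc_mult (nc_mult f g) h (a#w) = f [] * g [] * h (a#w) +
       nc_mult (\<lambda>u. f [] * g (a#u) + nc_mult (\<lambda>u. f (a#u)) g u) h w"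
      by (simp add: nc_mult_Cons nc_mult_Nil)
    also have "\<dots> = f [] * g [] * h (a#w) + nc_mult (nc_mult (\<lambda>u. f (a#u)) g) h w
        + f [] * nc_mult (\<lambda>u. g (a#u)) h w"
      by (simp add: nc_mult_add_left nc_mult_smult_left algebra_simps)
    also have "\<dots> = f [] * g [] * h (a#w) + nc_mult (\<lambda>u. f (a#u)) (nc_mult g h) w
        + f [] * nc_mult (\<lambda>u. g (a#u)) h w"
      using Cons by simp
    also have "\<dots> = nc_mult f (nc_mult g h) (a#w)"
      by (simp add: nc_mult_Cons nc_mult_Nil algebra_simps)
    finally show ?case .
  qed
qed

lemma nc_mult_one_left[simp]: "nc_mult nc_one f = f"
proof
  fix w
  have "nc_mult nc_one f w = (\<Sum>k\<le>length w. if k = 0 then f w else 0)"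
    unfolding nc_mult_def nc_one_def by (rule sum.cong) auto
  thus "nc_mult nc_one f w = f w" by simp
qed

lemma nc_mult_one_right[simp]: "nc_mult f nc_one = f"
proof
  fix w
  have "nc_mult f nc_one w = (\<Sum>k\<le>length w. if k = length w then f w else 0)"
    unfolding nc_mult_def nc_one_def by (rule sum.cong) auto
  thus "nc_mult f nc_one w = f w" by simp
qed

lemma nc_mult_zero_left[simp]: "nc_mult nc_zero f = nc_zero"
  and nc_mult_zero_right[simp]: "nc_mult f nc_zero = nc_zero"
  by (auto simp: nc_mult_def nc_zero_def)

lemma nc_mult_smult_left': "nc_mult (nc_smult c f) g = nc_smult c (nc_mult f g)"
  and nc_mult_smult_right': "nc_mult f (nc_smult c g) = nc_smult c (nc_mult f g)"
  by (auto simp: nc_mult_def nc_smult_def sum_distrib_left algebra_simps)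

lemma nc_pow_add: "nc_pow x (m + n) = nc_mult (nc_pow x m) (nc_pow x n)"
  by (induction m) (simp_all add: nc_mult_assoc)

lemma nc_pow_Suc': "nc_pow x (Suc n) = nc_mult (nc_pow x n) x"
  using nc_pow_add[of x n 1] by simp

definition ordge :: "nat \<Rightarrow> ncsym \<Rightarrow> bool" where
  "ordge m f \<longleftrightarrow> (\<forall>w. f w \<noteq> 0 \<longrightarrow> m \<le> wdeg w)"

definition lf :: "(nat \<Rightarrow> ncsym) \<Rightarrow> bool" where
  "lf F \<longleftrightarrow> (\<forall>n. ordge n (F n))"

lemma ordge_0[simp]: "ordge 0 f" by (simp add: ordge_def)

lemma ordge_mono: "m' \<le> m \<Longrightarrow> ordge m f \<Longrightarrow> ordge m' f"
  by (auto simp: ordge_def)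

lemma ordgeD: "ordge m f \<Longrightarrow> wdeg w < m \<Longrightarrow> f w = 0"
  by (auto simp: ordge_def)

lemma homogeneous_ordge: "homogeneous n f \<Longrightarrow> ordge n f"
  by (auto simp: ordge_def homogeneous_def)

lemma nc_mult_nonzero:
  assumes "nc_mult f g w \<noteq> 0"
  obtains k where "k \<le> length w" "f (take k w) \<noteq> 0" "g (drop k w) \<noteq> 0"
proof -
  from assms obtain k where "k \<in> {..length w}" "f (take k w) * g (drop k w) \<noteq> 0"
    unfolding nc_mult_def by (meson sum.not_neutral_contains_not_neutral)
  thus ?thesis using that by auto
qed

lemma ordge_mult: "ordge m f \<Longrightarrow> ordge n g \<Longrightarrow> ordge (m+n) (nc_mult f g)"
  unfolding ordge_def
  by (metis add_le_mono nc_mult_nonzero wdeg_take_drop)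

lemma homogeneous_mult: "homogeneous m f \<Longrightarrow> homogeneous n g \<Longrightarrow> homogeneous (m+n) (nc_mult f g)"
  unfolding homogeneous_def
  by (metis nc_mult_nonzero wdeg_take_drop)

lemma homogeneous_smult: "homogeneous m f \<Longrightarrow> homogeneous m (nc_smult c f)"
  by (auto simp: homogeneous_def nc_smult_def)

lemma homogeneous_one: "homogeneous 0 nc_one"
  by (auto simp: homogeneous_def nc_one_def)

lemma homogeneous_S: "homogeneous n (S n)"
  by (auto simp: homogeneous_def S_def nc_one_def)

lemma ordge_mult0: "ordge n g \<Longrightarrow> ordge n (nc_mult f g)"
  using ordge_mult[of 0 f n g] by simp

lemma ordge_mult0': "ordge n f \<Longrightarrow> ordge n (nc_mult f g)"
  using ordge_mult[of n f 0 g] by simp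

lemma fsum_bound:
  assumes "\<And>n. D < n \<Longrightarrow> F n w = 0"
  shows "fsum F w = (\<Sum>n\<le>D. F n w)"
proof -
  have sub: "{n. F n w \<noteq> 0} \<subseteq> {..D}" using assms by (auto simp: not_less[symmetric])
  show ?thesis unfolding fsum_def
    by (rule sum.mono_neutral_left) (use sub in auto)
qed

lemma fsum_lf_le: "lf F \<Longrightarrow> wdeg w \<le> D \<Longrightarrow> fsum F w = (\<Sum>n\<le>D. F n w)"
  by (rule fsum_bound) (auto simp: lf_def ordge_def, meson le_trans not_le)

lemma fsum_lf: "lf F \<Longrightarrow> fsum F w = (\<Sum>n\<le>wdeg w. F n w)"
  using fsum_lf_le by blast

lemma fsum_single: "(\<And>n. n > 0 \<Longrightarrow> F n = nc_zero) \<Longrightarrow> fsum F = F 0"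
proof
  fix w assume "\<And>n. n > 0 \<Longrightarrow> F n = nc_zero"
  hence "fsum F w = (\<Sum>n\<le>0. F n w)" by (intro fsum_bound) (auto simp: nc_zero_def)
  thus "fsum F w = F 0 w" by simp
qed

lemma lf_mult_left: "lf F \<Longrightarrow> lf (\<lambda>n. nc_mult f (F n))"
  by (auto simp: lf_def intro: ordge_mult0)

lemma lf_mult_right: "lf F \<Longrightarrow> lf (\<lambda>n. nc_mult (F n) f)"
  by (auto simp: lf_def intro: ordge_mult0')

lemma fsum_mult_left:
  assumes "lf F" shows "nc_mult f (fsum F) = fsum (\<lambda>n. nc_mult f (F n))"
proof
  fix w
  let ?D = "wdeg w"
  have "nc_mult f (fsum F) w = (\<Sum>k\<le>length w. f (take k w) * (\<Sum>n\<le>?D. F n (drop k w)))"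
    unfolding nc_mult_def
    by (intro sum.cong refl arg_cong2[where f="(*)"] fsum_lf_le[OF assms])
       (metis le_add2 wdeg_take_drop)
  also have "\<dots> = (\<Sum>n\<le>?D. nc_mult f (F n) w)"
    unfolding nc_mult_def sum_distrib_left by (rule sum.swap)
  also have "\<dots> = fsum (\<lambda>n. nc_mult f (F n)) w"
    by (rule fsum_lf[symmetric]) (rule lf_mult_left[OF assms])
  finally show "nc_mult f (fsum F) w = fsum (\<lambda>n. nc_mult f (F n)) w" .
qed

lemma fsum_mult_right:
  assumes "lf F" shows "nc_mult (fsum F) f = fsum (\<lambda>n. nc_mult (F n) f)"
proof
  fix w
  let ?D = "wdeg w"
  have "nc_mult (fsum F) f w = (\<Sum>k\<le>length w. (\<Sum>n\<le>?D. F n (take k w)) * f (drop k w))"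
    unfolding nc_mult_def
    by (intro sum.cong refl arg_cong2[where f="(*)"] fsum_lf_le[OF assms])
       (metis le_add1 wdeg_take_drop)
  also have "\<dots> = (\<Sum>n\<le>?D. nc_mult (F n) f w)"
    unfolding nc_mult_def sum_distrib_right by (rule sum.swap)
  also have "\<dots> = fsum (\<lambda>n. nc_mult (F n) f) w"
    by (rule fsum_lf[symmetric]) (rule lf_mult_right[OF assms])
  finally show "nc_mult (fsum F) f w = fsum (\<lambda>n. nc_mult (F n) f) w" .
qed

lemma fsum_swap:
  assumes "\<And>d n w. G d n w \<noteq> 0 \<Longrightarrow> d \<le> wdeg w \<and> n \<le> wdeg w"
  shows "fsum (\<lambda>d. fsum (G d)) = fsum (\<lambda>n. fsum (\<lambda>d. G d n))"
proof
  fix w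
  let ?D = "wdeg w"
  have i1: "fsum (G d) w = (\<Sum>n\<le>?D. G d n w)" for d
    by (rule fsum_bound) (use assms in force)
  have i2: "fsum (\<lambda>d. G d n) w = (\<Sum>d\<le>?D. G d n w)" for n
    by (rule fsum_bound) (use assms in force)
  have "fsum (\<lambda>d. fsum (G d)) w = (\<Sum>d\<le>?D. fsum (G d) w)"
    using assms by (intro fsum_bound) (force simp: i1 intro!: sum.neutral)
  also have "\<dots> = (\<Sum>n\<le>?D. fsum (\<lambda>d. G d n) w)"
    unfolding i1 i2 by (rule sum.swap)
  also have "\<dots> = fsum (\<lambda>n. fsum (\<lambda>d. G d n)) w"
    using assms by (intro fsum_bound[symmetric]) (force simp: i2 intro!: sum.neutral)
  finally show "fsum (\<lambda>d. fsum (G d)) w = fsum (\<lambda>n. fsum (\<lambda>d. G d n)) w" .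
qed

lemma fsum_triangle:
  assumes "\<And>i j. ordge (i+j) (G i j)"
  shows "fsum (\<lambda>i. fsum (G i)) = fsum (\<lambda>n. fsum (\<lambda>i. if i \<le> n then G i (n-i) else nc_zero))"
proof
  fix w
  let ?D = "wdeg w"
  have z: "G i j w = 0" if "?D < i + j" for i j using assms[of i j] that by (auto simp: ordge_def)
  have z': "i + j \<le> ?D" if "G i j w \<noteq> 0" for i j using z that by (meson not_le)
  have i1: "fsum (G i) w = (\<Sum>j\<le>?D. G i j w)" for i
    by (rule fsum_bound) (simp add: z)
  have i2: "fsum (\<lambda>i. if i \<le> n then G i (n-i) else nc_zero) w = (\<Sum>i\<le>n. G i (n-i) w)" for n
    by (subst fsum_bound[where D=n]) (auto simp: nc_zero_def intro: sum.cong)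
  have "fsum (\<lambda>i. fsum (G i)) w = (\<Sum>i\<le>?D. fsum (G i) w)"
    by (rule fsum_bound) (simp add: i1 z)
  also have "\<dots> = (\<Sum>i\<le>?D. \<Sum>j\<le>?D. G i j w)" by (simp add: i1)
  also have "\<dots> = (\<Sum>(i,j)\<in>{..?D}\<times>{..?D}. G i j w)"
    by (simp add: sum.cartesian_product)
  also have "\<dots> = (\<Sum>(i,j)\<in>{(i,j). i+j \<le> ?D}. G i j w)"
    by (rule sum.mono_neutral_right) (auto dest: z')
  also have "\<dots> = (\<Sum>n\<le>?D. \<Sum>i\<le>n. G i (n-i) w)"
    by (rule sum.triangle_reindex_eq)
  also have "\<dots> = fsum (\<lambda>n. fsum (\<lambda>i. if i \<le> n then G i (n-i) else nc_zero)) w"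
    unfolding i2[symmetric]
  proof (rule fsum_bound[symmetric])
    fix n assume "?D < n"
    thus "fsum (\<lambda>i. if i \<le> n then G i (n-i) else nc_zero) w = 0"
      by (simp add: i2 z)
  qed
  finally show "fsum (\<lambda>i. fsum (G i)) w = fsum (\<lambda>n. fsum (\<lambda>i. if i \<le> n then G i (n-i) else nc_zero)) w" .
qed

definition hc :: "nat \<Rightarrow> ncsym \<Rightarrow> ncsym" where
  "hc d f = (\<lambda>w. if wdeg w = d then f w else 0)"

definition Tx :: "ncsym \<Rightarrow> ncsym \<Rightarrow> ncsym" where
  "Tx x f = fsum (\<lambda>d. nc_mult (hc d f) (nc_pow x d))"

lemma homogeneous_hc: "homogeneous d (hc d f)"
  by (auto simp: homogeneous_def hc_def)

lemma lf_hc: "lf (\<lambda>d. nc_mult (hc d f) (G d))"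
  unfolding lf_def by (auto intro: ordge_mult0' homogeneous_ordge homogeneous_hc)

lemma lf_hom: "(\<And>n. homogeneous n (F n)) \<Longrightarrow> lf (\<lambda>n. nc_mult (F n) (G n))"
  unfolding lf_def by (auto intro: ordge_mult0' homogeneous_ordge)

lemma lf_S: "lf S"
  unfolding lf_def by (auto intro: homogeneous_ordge homogeneous_S)

lemma hc_mult_hom:
  assumes hf: "homogeneous n f"
  shows "hc d (nc_mult f F) = (if n \<le> d then nc_mult f (hc (d-n) F) else nc_zero)"
proof
  fix w
  have td: "wdeg (take k w) + wdeg (drop k w) = wdeg w" for k by (rule wdeg_take_drop)
  have fz: "f (take k w) = 0" if "wdeg (take k w) \<noteq> n" for k
    using hf that by (auto simp: homogeneous_def)
  show "hc d (nc_mult f F) w = (if n \<le> d then nc_mult f (hc (d-n) F) else nc_zero) w"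
  proof (cases "n \<le> d")
    case True
    show ?thesis
    proof (cases "wdeg w = d")
      case True
      then show ?thesis using \<open>n \<le> d\<close> unfolding hc_def nc_mult_def
        by (auto intro!: sum.cong) (metis fz td add_diff_cancel_left' mult_zero_left)
    next
      case False
      then show ?thesis using \<open>n \<le> d\<close> unfolding hc_def nc_mult_def
        by (auto intro!: sum.neutral) (metis fz td le_add_diff_inverse)
    qed
  next
    case False
    have "nc_mult f F w = 0" if "wdeg w = d"
      unfolding nc_mult_def
      by (rule sum.neutral) (metis False fz td le_add1 mult_zero_left that)
    thus ?thesis using False by (simp add: hc_def nc_zero_def)
  qed
qed

lemma fsum_shift: "fsum (\<lambda>d. if n \<le> d then G (d - n) else nc_zero) = fsum G"
proof
  fix w
  have e: "{d. (if n \<le> d then G (d - n) else nc_zero) w \<noteq> 0} = (\<lambda>j. j + n) ` {j. G j w \<noteq> 0}"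
    by (auto simp: nc_zero_def image_iff split: if_splits) (metis le_add_diff_inverse2)
  have "fsum (\<lambda>d. if n \<le> d then G (d - n) else nc_zero) w
      = (\<Sum>d\<in>(\<lambda>j. j + n) ` {j. G j w \<noteq> 0}. (if n \<le> d then G (d - n) else nc_zero) w)"
    unfolding fsum_def e ..
  also have "\<dots> = (\<Sum>j\<in>{j. G j w \<noteq> 0}. G j w)"
    by (subst sum.reindex) (auto simp: inj_on_def)
  finally show "fsum (\<lambda>d. if n \<le> d then G (d - n) else nc_zero) w = fsum G w"
    by (simp add: fsum_def)
qed

lemma T_hom:
  assumes hf: "homogeneous n f"
  shows "Tx x (nc_mult f F) = nc_mult f (nc_mult (Tx x F) (nc_pow x n))"
proof -
  have "Tx x (nc_mult f F) = fsum (\<lambda>d. if n \<le> d then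
      nc_mult f (nc_mult (nc_mult (hc (d-n) F) (nc_pow x (d-n))) (nc_pow x n)) else nc_zero)"
    unfolding Tx_def
  proof (rule arg_cong[where f=fsum], rule ext)
    fix d
    show "nc_mult (hc d (nc_mult f F)) (nc_pow x d) = (if n \<le> d then
      nc_mult f (nc_mult (nc_mult (hc (d-n) F) (nc_pow x (d-n))) (nc_pow x n)) else nc_zero)"
      using nc_pow_add[of x "d-n" n]
      by (auto simp: hc_mult_hom[OF hf] nc_mult_assoc)
  qed
  also have "\<dots> = fsum (\<lambda>j. nc_mult f (nc_mult (nc_mult (hc j F) (nc_pow x j)) (nc_pow x n)))"
    by (rule fsum_shift)
  also have "\<dots> = nc_mult f (fsum (\<lambda>j. nc_mult (nc_mult (hc j F) (nc_pow x j)) (nc_pow x n)))"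
    by (rule fsum_mult_left[symmetric]) (intro lf_mult_right lf_hc)
  also have "\<dots> = nc_mult f (nc_mult (Tx x F) (nc_pow x n))"
    unfolding Tx_def by (subst fsum_mult_right) (auto intro: lf_hc)
  finally show ?thesis .
qed

lemma hc_fsum: "hc d (fsum F) = fsum (\<lambda>n. hc d (F n))"
  by (auto simp: hc_def fsum_def)

lemma T_cont:
  assumes "lf F" shows "Tx x (fsum F) = fsum (\<lambda>n. Tx x (F n))"
proof -
  have lfd: "lf (\<lambda>n. hc d (F n))" for d
    using assms by (auto simp: lf_def ordge_def hc_def)
  have "Tx x (fsum F) = fsum (\<lambda>d. fsum (\<lambda>n. nc_mult (hc d (F n)) (nc_pow x d)))"
    unfolding Tx_def hc_fsum by (subst fsum_mult_right[OF lfd]) (rule refl)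
  also have "\<dots> = fsum (\<lambda>n. fsum (\<lambda>d. nc_mult (hc d (F n)) (nc_pow x d)))"
  proof (rule fsum_swap)
    fix d n w assume nz: "nc_mult (hc d (F n)) (nc_pow x d) w \<noteq> 0"
    have "ordge d (nc_mult (hc d (F n)) (nc_pow x d))"
      by (intro ordge_mult0' homogeneous_ordge homogeneous_hc)
    moreover have "ordge n (nc_mult (hc d (F n)) (nc_pow x d))"
      using lfd[of d] by (intro ordge_mult0') (simp add: lf_def)
    ultimately show "d \<le> wdeg w \<and> n \<le> wdeg w" using nz by (auto simp: ordge_def)
  qed
  also have "\<dots> = fsum (\<lambda>n. Tx x (F n))" unfolding Tx_def ..
  finally show ?thesis .
qed

lemma T_one: "Tx x nc_one = nc_one"
proof -
  have "Tx x nc_one = nc_mult (hc 0 nc_one) (nc_pow x 0)"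
  proof (unfold Tx_def, rule fsum_single)
    fix n :: nat assume "0 < n"
    hence "hc n nc_one = nc_zero" by (auto simp: hc_def nc_one_def nc_zero_def)
    thus "nc_mult (hc n nc_one) (nc_pow x n) = nc_zero" by simp
  qed
  also have "hc 0 nc_one = nc_one" by (auto simp: hc_def nc_one_def)
  finally show ?thesis by simp
qed

lemma T_homog1: "homogeneous n f \<Longrightarrow> Tx x f = nc_mult f (nc_pow x n)"
  using T_hom[of n f x nc_one] by (simp add: T_one)

lemma NW_Nil[simp]: "negA_word Lam [] = nc_one"
  by (simp add: negA_word_def)

lemma NW_Cons: "negA_word Lam (a#w) = nc_mult (nc_smult ((-1)^Suc a) (Lam (Suc a))) (negA_word Lam w)"
  by (simp add: negA_word_def)

lemma NW_append: "negA_word Lam (u@v) = nc_mult (negA_word Lam u) (negA_word Lam v)"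
  by (induction u) (simp_all add: NW_Cons nc_mult_assoc)

lemma NW_hom:
  assumes HL: "\<And>n. homogeneous n (Lam n)"
  shows "homogeneous (wdeg w) (negA_word Lam w)"
proof (induction w)
  case Nil thus ?case by (simp add: homogeneous_one)
next
  case (Cons a w)
  have "homogeneous (Suc a + wdeg w) (nc_mult (nc_smult ((-1)^Suc a) (Lam (Suc a))) (negA_word Lam w))"
    by (rule homogeneous_mult[OF homogeneous_smult[OF HL] Cons])
  thus ?case by (simp add: NW_Cons)
qed

lemma NW_zero:
  assumes HL: "\<And>n. homogeneous n (Lam n)"
  shows "wdeg w \<noteq> wdeg v \<Longrightarrow> negA_word Lam w v = 0"
  using NW_hom[OF HL, of w] by (auto simp: homogeneous_def)

lemma finite_B: "finite {w. wdeg w \<le> D}"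
proof (rule finite_subset)
  have l: "Suc x \<le> wdeg w" if "x \<in> set w" for x w using that by (induction w) auto
  show "{w. wdeg w \<le> D} \<subseteq> {w. set w \<subseteq> {..<D} \<and> length w \<le> D}"
    using l length_le_wdeg by (force intro: le_trans)
  show "finite {w. set w \<subseteq> {..<D} \<and> length w \<le> D}"
    by (rule finite_lists_length_le) simp
qed

lemma negA_alt:
  assumes HL: "\<And>n. homogeneous n (Lam n)" and v: "wdeg v \<le> D"
  shows "negA Lam f v = (\<Sum>w\<in>{w. wdeg w \<le> D}. f w * negA_word Lam w v)"
  unfolding negA_def
  by (rule sum.mono_neutral_left) (auto simp: finite_B v NW_zero[OF HL])

lemma negA_single:
  assumes HL: "\<And>n. homogeneous n (Lam n)" and f: "\<And>w. w \<noteq> wz \<Longrightarrow> f w = 0"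
  shows "negA Lam f = (\<lambda>v. f wz * negA_word Lam wz v)"
proof
  fix v
  have "negA Lam f v = (\<Sum>w\<in>{w. wdeg w \<le> max (wdeg v) (wdeg wz)}. f w * negA_word Lam w v)"
    by (rule negA_alt[OF HL]) simp
  also have "\<dots> = f wz * negA_word Lam wz v"
    by (subst sum.remove[of _ wz]) (auto simp: finite_B f intro!: sum.neutral)
  finally show "negA Lam f v = f wz * negA_word Lam wz v" .
qed

lemma negA_one:
  assumes HL: "\<And>n. homogeneous n (Lam n)"
  shows "negA Lam nc_one = nc_one"
  by (subst negA_single[OF HL, where wz="[]"]) (auto simp: nc_one_def)

lemma negA_S:
  assumes HL: "\<And>n. homogeneous n (Lam n)" and n: "n > 0"
  shows "negA Lam (S n) = nc_smult ((-1)^n) (Lam n)"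
proof -
  obtain a where a: "n = Suc a" using n not0_implies_Suc by blast
  show ?thesis
    by (subst negA_single[OF HL, where wz="[a]"]) (auto simp: S_def a NW_Cons)
qed

lemma bij_split:
  "bij_betw (\<lambda>(w1,w2). (w1@w2, length w1)) {(w1,w2). wdeg w1 + wdeg w2 \<le> D}
     (Sigma {w. wdeg w \<le> D} (\<lambda>w. {..length w}))"
  by (rule bij_betw_byWitness[where f'="\<lambda>(w,k). (take k w, drop k w)"])
     (auto simp: wdeg_take_drop)

lemma negA_mult:
  assumes HL: "\<And>n. homogeneous n (Lam n)"
  shows "negA Lam (nc_mult f F) = nc_mult (negA Lam f) (negA Lam F)"
proof
  fix u
  define D where "D = wdeg u"
  define B where "B = {w. wdeg w \<le> D}"
  have fB: "finite B" unfolding B_def by (rule finite_B)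
  let ?N = "negA_word Lam"
  have "negA Lam (nc_mult f F) u = (\<Sum>w\<in>B. nc_mult f F w * ?N w u)"
    unfolding B_def by (rule negA_alt[OF HL]) (simp add: D_def)
  also have "\<dots> = (\<Sum>w\<in>B. \<Sum>k\<le>length w. f (take k w) * F (drop k w) * ?N w u)"
    unfolding nc_mult_def[of f F] sum_distrib_right ..
  also have "\<dots> = (\<Sum>(w,k)\<in>Sigma B (\<lambda>w. {..length w}). f (take k w) * F (drop k w) * ?N w u)"
    by (rule sum.Sigma) (auto simp: fB)
  also have "\<dots> = (\<Sum>p\<in>{(w1,w2). wdeg w1 + wdeg w2 \<le> D}.
      (\<lambda>(w,k). f (take k w) * F (drop k w) * ?N w u) ((\<lambda>(w1,w2). (w1@w2, length w1)) p))"
    unfolding B_def by (rule sum.reindex_bij_betw[OF bij_split, symmetric])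
  also have "\<dots> = (\<Sum>(w1,w2)\<in>{(w1,w2). wdeg w1 + wdeg w2 \<le> D}. f w1 * F w2 * ?N (w1@w2) u)"
    by (rule sum.cong) auto
  also have "\<dots> = (\<Sum>(w1,w2)\<in>B\<times>B. f w1 * F w2 * ?N (w1@w2) u)"
  proof (rule sum.mono_neutral_left)
    show "finite (B \<times> B)" using fB by simp
    show "{(w1,w2). wdeg w1 + wdeg w2 \<le> D} \<subseteq> B \<times> B" by (auto simp: B_def)
    show "\<forall>i\<in>B \<times> B - {(w1,w2). wdeg w1 + wdeg w2 \<le> D}. (case i of (w1,w2) \<Rightarrow> f w1 * F w2 * ?N (w1@w2) u) = 0"
      by (auto simp: D_def) (metis NW_zero[OF HL] wdeg_append order_refl)
  qed
  also have "\<dots> = (\<Sum>(w1,w2)\<in>B\<times>B. \<Sum>j\<le>length u.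
        (f w1 * ?N w1 (take j u)) * (F w2 * ?N w2 (drop j u)))"
    by (rule sum.cong) (auto simp: NW_append nc_mult_def sum_distrib_left mult_ac)
  also have "\<dots> = (\<Sum>j\<le>length u. \<Sum>w1\<in>B. \<Sum>w2\<in>B.
        (f w1 * ?N w1 (take j u)) * (F w2 * ?N w2 (drop j u)))"
  proof -
    have "(\<Sum>(w1,w2)\<in>B\<times>B. \<Sum>j\<le>length u.
        (f w1 * ?N w1 (take j u)) * (F w2 * ?N w2 (drop j u)))
      = (\<Sum>w1\<in>B. \<Sum>w2\<in>B. \<Sum>j\<le>length u.
        (f w1 * ?N w1 (take j u)) * (F w2 * ?N w2 (drop j u)))"
      by (rule sum.cartesian_product[symmetric])
    also have "\<dots> = (\<Sum>w1\<in>B. \<Sum>j\<le>length u. \<Sum>w2\<in>B.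
        (f w1 * ?N w1 (take j u)) * (F w2 * ?N w2 (drop j u)))"
      by (rule sum.cong[OF refl], rule sum.swap)
    also have "\<dots> = (\<Sum>j\<le>length u. \<Sum>w1\<in>B. \<Sum>w2\<in>B.
        (f w1 * ?N w1 (take j u)) * (F w2 * ?N w2 (drop j u)))"
      by (rule sum.swap)
    finally show ?thesis .
  qed
  also have "\<dots> = (\<Sum>j\<le>length u. negA Lam f (take j u) * negA Lam F (drop j u))"
  proof (rule sum.cong[OF refl])
    fix j
    have d1: "wdeg (take j u) \<le> D" and d2: "wdeg (drop j u) \<le> D"
      using wdeg_take_drop[of j u] by (auto simp: D_def)
    show "(\<Sum>w1\<in>B. \<Sum>w2\<in>B. (f w1 * ?N w1 (take j u)) * (F w2 * ?N w2 (drop j u)))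
        = negA Lam f (take j u) * negA Lam F (drop j u)"
      unfolding negA_alt[OF HL d1] negA_alt[OF HL d2] B_def
      by (simp add: sum_product)
  qed
  also have "\<dots> = nc_mult (negA Lam f) (negA Lam F) u" by (simp add: nc_mult_def)
  finally show "negA Lam (nc_mult f F) u = nc_mult (negA Lam f) (negA Lam F) u" .
qed

lemma negA_pow:
  assumes HL: "\<And>n. homogeneous n (Lam n)"
  shows "negA Lam (nc_pow f n) = nc_pow (negA Lam f) n"
  by (induction n) (simp_all add: negA_one[OF HL] negA_mult[OF HL])

lemma negA_cont:
  assumes HL: "\<And>n. homogeneous n (Lam n)" and lF: "lf F"
  shows "negA Lam (fsum F) = fsum (\<lambda>n. negA Lam (F n))"
proof
  fix v
  define D where "D = wdeg v"
  define B where "B = {w. wdeg w \<le> D}"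
  have fB: "finite B" unfolding B_def by (rule finite_B)
  have "negA Lam (fsum F) v = (\<Sum>w\<in>B. fsum F w * negA_word Lam w v)"
    unfolding B_def by (rule negA_alt[OF HL]) (simp add: D_def)
  also have "\<dots> = (\<Sum>w\<in>B. \<Sum>n\<le>D. F n w * negA_word Lam w v)"
    by (rule sum.cong) (auto simp: B_def fsum_lf_le[OF lF] sum_distrib_right)
  also have "\<dots> = (\<Sum>n\<le>D. negA Lam (F n) v)"
    by (subst sum.swap) (simp add: negA_alt[OF HL, where D=D] D_def B_def)
  also have "\<dots> = fsum (\<lambda>n. negA Lam (F n)) v"
  proof (rule fsum_bound[symmetric])
    fix n assume "D < n"
    have "F n w = 0" if "wdeg w \<le> D" for w
      using lF \<open>D < n\<close> that by (auto simp: lf_def ordge_def, meson le_trans not_le)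
    thus "negA Lam (F n) v = 0"
      by (subst negA_alt[OF HL, of v D]) (auto simp: D_def)
  qed
  finally show "negA Lam (fsum F) v = fsum (\<lambda>n. negA Lam (F n)) v" .
qed

lemma nc_smult_one[simp]: "nc_smult 1 f = f" by (simp add: nc_smult_def)

theorem mainTheorem1:
  fixes Lam K :: "nat \<Rightarrow> ncsym" and g h :: ncsym
  assumes Lam0: "Lam 0 = nc_one"
    and Lam_def: "\<And>n. fsum (\<lambda>i. if i \<le> n then nc_mult (S i) (nc_smult ((-1) ^ (n - i)) (Lam (n - i))) else nc_zero)
                     = (if n = 0 then nc_one else nc_zero)"
    and K0: "K 0 = nc_one"
    and K_hom: "\<And>n. homogeneous n (K n)"
    and K_eq: "sigma1 = fsum (\<lambda>n. nc_mult (K n) (nc_pow sigma1 n))"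
    and g0: "g [] = 1"
    and g_eq: "g = fsum (\<lambda>n. nc_mult (S n) (nc_pow g n))"
    and h_inv: "nc_mult g h = nc_one" "nc_mult h g = nc_one"
  shows "nc_add nc_one (fsum (\<lambda>n. if n = 0 then nc_zero else K n)) = negA Lam h"
proof -
  define L where "L = (\<lambda>n. nc_smult ((-1)^n) (Lam n))"
  have LD: "fsum (\<lambda>i. if i \<le> n then nc_mult (S i) (L (n-i)) else nc_zero)
           = (if n = 0 then nc_one else nc_zero)" for n
    using Lam_def[of n] by (simp only: L_def)
  have lfLD: "lf (\<lambda>i. if i \<le> n then nc_mult (S i) (L (n-i)) else nc_zero)" for n
    unfolding lf_def by (auto simp: ordge_def nc_zero_def intro: ordge_mult0' homogeneous_ordge homogeneous_S)
      (meson homogeneous_S homogeneous_ordge ordge_def ordge_mult0')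
  have HL: "homogeneous n (Lam n)" for n
  proof (induction n rule: less_induct)
    case (less n)
    show ?case
    proof (cases n)
      case 0 thus ?thesis using Lam0 homogeneous_one by simp
    next
      case (Suc m)
      show ?thesis unfolding homogeneous_def
      proof (intro allI impI, rule ccontr)
        fix w assume nz: "Lam n w \<noteq> 0" and ne: "wdeg w \<noteq> n"
        let ?F = "\<lambda>i. if i \<le> n then nc_mult (S i) (L (n-i)) else nc_zero"
        have "fsum ?F w = 0" using LD[of n] Suc by (simp add: nc_zero_def)
        moreover have "fsum ?F w = (\<Sum>i\<le>n. ?F i w)"
          by (rule fsum_bound) (simp add: nc_zero_def)
        moreover have "(\<Sum>i\<le>n. ?F i w) = ?F 0 w + (\<Sum>i\<le>m. ?F (Suc i) w)"
          unfolding Suc by (rule sum.atMost_Suc_shift)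
        moreover have "?F (Suc i) w = 0" if "i \<le> m" for i
        proof -
          have "homogeneous (Suc i + (n - Suc i)) (nc_mult (S (Suc i)) (L (n - Suc i)))"
            unfolding L_def by (intro homogeneous_mult homogeneous_S homogeneous_smult less) (simp add: Suc)
          thus ?thesis using that ne Suc by (auto simp: homogeneous_def)
        qed
        moreover have "?F 0 w = (-1)^n * Lam n w"
          by (simp add: S_def L_def nc_smult_def)
        ultimately have "(-1)^n * Lam n w = 0" by simp
        thus False using nz by simp
      qed
    qed
  qed
  have HL': "homogeneous n (L n)" for n unfolding L_def by (intro homogeneous_smult HL)
  have negS: "negA Lam (S n) = L n" for n
  proof (cases "n = 0")
    case True thus ?thesis by (simp add: S_def L_def Lam0 negA_one[OF HL])
  next
    case False thus ?thesis by (simp add: L_def negA_S[OF HL])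
  qed
  define x where "x = negA Lam g"
  define u where "u = negA Lam h"
  have X1: "x = fsum (\<lambda>n. nc_mult (L n) (nc_pow x n))"
  proof -
    have "x = negA Lam (fsum (\<lambda>n. nc_mult (S n) (nc_pow g n)))"
      unfolding x_def using g_eq by (rule arg_cong)
    also have "\<dots> = fsum (\<lambda>n. negA Lam (nc_mult (S n) (nc_pow g n)))"
      by (rule negA_cont[OF HL]) (intro lf_hom homogeneous_S)
    also have "\<dots> = fsum (\<lambda>n. nc_mult (L n) (nc_pow x n))"
      by (simp add: negA_mult[OF HL] negA_pow[OF HL] negS x_def)
    finally show ?thesis .
  qed
  have X2: "nc_mult x u = nc_one" "nc_mult u x = nc_one"
    unfolding x_def u_def using h_inv
    by (metis negA_mult[OF HL] negA_one[OF HL])+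
  have X3: "nc_mult (fsum (\<lambda>i. nc_mult (S i) (nc_pow x i))) x = nc_one"
  proof -
    define G where "G = (\<lambda>i j. nc_mult (nc_mult (S i) (L j)) (nc_pow x (i+j)))"
    have lfL: "lf (\<lambda>j. nc_mult (L j) (nc_pow x j))" by (intro lf_hom HL')
    have step: "nc_mult (nc_mult (S i) (nc_pow x i)) x = fsum (G i)" for i
    proof -
      have "nc_mult (nc_mult (S i) (nc_pow x i)) x = nc_mult (S i) (nc_mult x (nc_pow x i))"
        by (simp add: nc_mult_assoc nc_pow_Suc'[symmetric])
      also have "\<dots> = nc_mult (S i) (fsum (\<lambda>j. nc_mult (nc_mult (L j) (nc_pow x j)) (nc_pow x i)))"
        by (subst X1) (simp add: fsum_mult_right[OF lfL] del: nc_pow.simps)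
      also have "\<dots> = fsum (\<lambda>j. nc_mult (S i) (nc_mult (nc_mult (L j) (nc_pow x j)) (nc_pow x i)))"
        by (rule fsum_mult_left) (intro lf_mult_right lfL)
      also have "\<dots> = fsum (G i)"
        unfolding G_def by (simp add: nc_mult_assoc nc_pow_add[symmetric] add.commute)
      finally show ?thesis .
    qed
    have "nc_mult (fsum (\<lambda>i. nc_mult (S i) (nc_pow x i))) x
        = fsum (\<lambda>i. nc_mult (nc_mult (S i) (nc_pow x i)) x)"
      by (rule fsum_mult_right) (intro lf_hom homogeneous_S)
    also have "\<dots> = fsum (\<lambda>i. fsum (G i))" by (simp add: step)
    also have "\<dots> = fsum (\<lambda>n. fsum (\<lambda>i. if i \<le> n then G i (n-i) else nc_zero))"
      by (rule fsum_triangle) (unfold G_def, intro ordge_mult0' homogeneous_ordge homogeneous_mult homogeneous_S HL')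
    also have "\<dots> = fsum (\<lambda>n. nc_mult (if n = 0 then nc_one else nc_zero) (nc_pow x n))"
    proof (rule arg_cong[where f=fsum], rule ext)
      fix n
      have "fsum (\<lambda>i. if i \<le> n then G i (n-i) else nc_zero)
          = fsum (\<lambda>i. nc_mult (if i \<le> n then nc_mult (S i) (L (n-i)) else nc_zero) (nc_pow x n))"
        by (rule arg_cong[where f=fsum]) (auto simp: G_def)
      also have "\<dots> = nc_mult (if n = 0 then nc_one else nc_zero) (nc_pow x n)"
        by (subst fsum_mult_right[OF lfLD, symmetric]) (simp add: LD)
      finally show "fsum (\<lambda>i. if i \<le> n then G i (n-i) else nc_zero)
          = nc_mult (if n = 0 then nc_one else nc_zero) (nc_pow x n)" .
    qed
    also have "\<dots> = nc_one"
      by (subst fsum_single) auto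
    finally show ?thesis .
  qed
  define P where "P = (\<lambda>n. Tx x (nc_pow sigma1 n))"
  have sig: "sigma1 = fsum S" by (simp add: sigma1_def)
  have X4: "nc_mult (P n) (nc_pow x n) = nc_one" for n
  proof (induction n)
    case 0 thus ?case by (simp add: P_def T_one)
  next
    case (Suc n)
    have "P (Suc n) = Tx x (fsum (\<lambda>i. nc_mult (S i) (nc_pow sigma1 n)))"
    proof -
      have "nc_mult sigma1 (nc_pow sigma1 n) = fsum (\<lambda>i. nc_mult (S i) (nc_pow sigma1 n))"
        by (subst (1) sig) (rule fsum_mult_right[OF lf_S])
      thus ?thesis by (simp add: P_def)
    qed
    also have "\<dots> = fsum (\<lambda>i. nc_mult (S i) (nc_mult (P n) (nc_pow x i)))"
      by (subst T_cont) (auto intro: lf_hom homogeneous_S simp: T_hom[OF homogeneous_S] P_def)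
    finally have e: "P (Suc n) = \<dots>" .
    have "nc_mult (P (Suc n)) (nc_pow x (Suc n))
        = fsum (\<lambda>i. nc_mult (nc_mult (S i) (nc_mult (P n) (nc_pow x i))) (nc_pow x (Suc n)))"
      unfolding e by (rule fsum_mult_right) (intro lf_hom homogeneous_S)
    also have "\<dots> = fsum (\<lambda>i. nc_mult (nc_mult (S i) (nc_pow x i)) x)"
    proof (rule arg_cong[where f=fsum], rule ext)
      fix i
      have "nc_mult (nc_pow x i) (nc_pow x (Suc n)) = nc_mult (nc_pow x n) (nc_pow x (Suc i))"
        by (simp only: nc_pow_add[symmetric]) (simp add: add.commute)
      hence "nc_mult (nc_mult (S i) (nc_mult (P n) (nc_pow x i))) (nc_pow x (Suc n))
          = nc_mult (S i) (nc_mult (nc_mult (P n) (nc_pow x n)) (nc_pow x (Suc i)))"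
        by (simp only: nc_mult_assoc)
      also have "\<dots> = nc_mult (nc_mult (S i) (nc_pow x i)) x"
        by (simp only: Suc nc_mult_one_left nc_pow_Suc' nc_mult_assoc)
      finally show "nc_mult (nc_mult (S i) (nc_mult (P n) (nc_pow x i))) (nc_pow x (Suc n))
          = nc_mult (nc_mult (S i) (nc_pow x i)) x" .
    qed
    also have "\<dots> = nc_mult (fsum (\<lambda>i. nc_mult (S i) (nc_pow x i))) x"
      by (rule fsum_mult_right[symmetric]) (intro lf_hom homogeneous_S)
    also have "\<dots> = nc_one" by (rule X3)
    finally show ?case .
  qed
  have X5a: "Tx x sigma1 = fsum (\<lambda>i. nc_mult (S i) (nc_pow x i))"
    unfolding sig by (simp add: T_cont[OF lf_S] T_homog1[OF homogeneous_S])
  have X5b: "Tx x sigma1 = fsum K"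
  proof -
    have "Tx x sigma1 = Tx x (fsum (\<lambda>n. nc_mult (K n) (nc_pow sigma1 n)))"
      using K_eq by (rule arg_cong)
    also have "\<dots> = fsum (\<lambda>n. nc_mult (K n) (nc_mult (P n) (nc_pow x n)))"
      by (subst T_cont) (auto intro: lf_hom K_hom simp: T_hom[OF K_hom] P_def)
    also have "\<dots> = fsum K" by (simp add: X4)
    finally show ?thesis .
  qed
  have X6: "fsum K = u"
  proof -
    have "nc_mult (fsum K) x = nc_one" using X3 X5a X5b by simp
    hence "nc_mult (nc_mult (fsum K) x) u = u" by simp
    thus ?thesis by (simp add: nc_mult_assoc X2)
  qed
  have lfK: "lf K" unfolding lf_def by (intro allI homogeneous_ordge K_hom)
  have lfK': "lf (\<lambda>n. if n = 0 then nc_zero else K n)"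
    using lfK by (auto simp: lf_def ordge_def nc_zero_def)
  have "nc_add nc_one (fsum (\<lambda>n. if n = 0 then nc_zero else K n)) = fsum K"
  proof
    fix w
    have e: "K n w = (if n = 0 then nc_zero else K n) w + (if n = 0 then nc_one w else 0)" for n
      using K0 by (auto simp: nc_zero_def)
    show "nc_add nc_one (fsum (\<lambda>n. if n = 0 then nc_zero else K n)) w = fsum K w"
      unfolding fsum_lf[OF lfK] fsum_lf[OF lfK'] nc_add_def
      by (subst e) (simp add: sum.distrib)
  qed
  thus ?thesis using X6 u_def by simp
qed

end
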